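(* Let $n\ge2$, $\kappa>0$, and let $\tilde\theta:\mathbb R\to[0,\infty)$ be locally Lipschitz and nondecreasing with $\tilde\theta(s)=0$ for $s\le 0$ and $\tilde\theta(s)>0$ for $s>0$; set $\theta(a,b)=\tilde\theta(\min(a,b))$. Let $\rho:[0,\infty)\to\mathbb R^n$ be the solution of $$\frac{d\rho_j}{dt}=\kappa\sum_{k=1}^n\theta(\rho_j,\rho_k)(\rho_j-\rho_k),\qquad j=1,\dots,n,$$ with $\rho(0)\in\mathcal P$ satisfying $\rho_1(0)>\max_{1<j\le n}\rho_j(0)$. Then for all $t\ge0$, $$\rho_1(t)-\max_{1<j\le n}\rho_j(t)\ \ge\ \rho_1(0)-\max_{1<j\le n}\rho_j(0).$$
   Context: $\mathcal P=\{\rho\in\mathbb R^n:\rho_i\ge0\ \forall i,\ \sum_{i=1}^n\rho_i=1\}$ denotes the probability simplex. *)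

theory Defs
  imports "HOL-Analysis.Analysis"
begin

definition locally_lipschitz :: "(real \<Rightarrow> real) \<Rightarrow> bool" where
  "locally_lipschitz f \<longleftrightarrow> (\<forall>x. \<exists>e>0. \<exists>L. L-lipschitz_on (cball x e) f)"

definition prob_simplex :: "nat \<Rightarrow> (nat \<Rightarrow> real) set" where
  "prob_simplex n = {r. (\<forall>i\<in>{1..n}. r i \<ge> 0) \<and> (\<Sum>i=1..n. r i) = 1}"

end

theory Submission
  imports Defs
begin

theorem lemma3p4:
  fixes n :: nat and \<kappa> :: real and \<theta>t :: "real \<Rightarrow> real"
    and \<rho> :: "real \<Rightarrow> nat \<Rightarrow> real"
  assumes n2: "n \<ge> 2"
    and kpos: "\<kappa> > 0"
    and lip: "locally_lipschitz \<theta>t"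
    and mono: "mono \<theta>t"
    and nonneg: "\<And>s. \<theta>t s \<ge> 0"
    and zero: "\<And>s. s \<le> 0 \<Longrightarrow> \<theta>t s = 0"
    and pos: "\<And>s. s > 0 \<Longrightarrow> \<theta>t s > 0"
    and ode: "\<And>t j. t \<ge> 0 \<Longrightarrow> j \<in> {1..n} \<Longrightarrow>
       ((\<lambda>\<tau>. \<rho> \<tau> j) has_real_derivative
          \<kappa> * (\<Sum>k=1..n. \<theta>t (min (\<rho> t j) (\<rho> t k)) * (\<rho> t j - \<rho> t k)))
         (at t within {0..})"
    and init: "\<rho> 0 \<in> prob_simplex n"
    and gap: "\<rho> 0 1 > Max ((\<lambda>j. \<rho> 0 j) ` {2..n})"
  shows "\<forall>t\<ge>0. \<rho> t 1 - Max ((\<lambda>j. \<rho> t j) ` {2..n})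
                 \<ge> \<rho> 0 1 - Max ((\<lambda>j. \<rho> 0 j) ` {2..n})"
proof -
  define D0 where "D0 = \<rho> 0 1 - Max ((\<lambda>j. \<rho> 0 j) ` {2..n})"
  have D0pos: "D0 > 0" using gap by (simp add: D0_def)
  have fin: "finite ((\<lambda>j. \<rho> t j) ` {2..n})" for t by simp
  have ne: "(\<lambda>j. \<rho> t j) ` {2..n} \<noteq> {}" for t using n2 by simp
  have le0: "\<rho> 0 j \<le> Max ((\<lambda>j. \<rho> 0 j) ` {2..n})" if "j \<in> {2..n}" for j
    using that by (intro Max_ge) auto
  define g where "g \<epsilon> j t = \<rho> t 1 - \<rho> t j + \<epsilon> * (1 + t)" for \<epsilon> j t
  have gderiv: "((g \<epsilon> j) has_real_derivative
      (\<kappa> * (\<Sum>k=1..n. \<theta>t (min (\<rho> t 1) (\<rho> t k)) * (\<rho> t 1 - \<rho> t k))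
      - \<kappa> * (\<Sum>k=1..n. \<theta>t (min (\<rho> t j) (\<rho> t k)) * (\<rho> t j - \<rho> t k)) + \<epsilon>))
      (at t within {0..})" if "t \<ge> 0" "j \<in> {1..n}" for \<epsilon> j t
  proof -
    have "((\<lambda>t. \<epsilon> * (1 + t)) has_real_derivative \<epsilon>) (at t within {0..})"
      by (auto intro!: derivative_eq_intros)
    then show ?thesis unfolding g_def
      using ode[OF that(1) that(2)] ode[OF that(1), of 1] n2
      by (auto intro!: derivative_intros)
  qed
  have gcont: "continuous_on {0..} (g \<epsilon> j)" if "j \<in> {1..n}" for \<epsilon> j
    by (rule DERIV_continuous_on[OF gderiv]) (use that in auto)
  have main: "\<forall>t\<in>{0..T}. \<forall>j\<in>{2..n}. g \<epsilon> j t > D0"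
    if T: "T \<ge> 0" and eps: "\<epsilon> > 0" "\<epsilon> * (1 + T) < D0" for T \<epsilon>
  proof (rule ccontr)
    assume neg: "\<not> (\<forall>t\<in>{0..T}. \<forall>j\<in>{2..n}. g \<epsilon> j t > D0)"
    define S where "S = (\<Union>j\<in>{2..n}. {0..T} \<inter> g \<epsilon> j -` {..D0})"
    have Sne: "S \<noteq> {}" using neg unfolding S_def by (auto simp: not_less)
    have Sbdd: "bdd_below S" unfolding S_def by (auto intro!: bdd_belowI[of _ 0])
    have Scl: "closed S" unfolding S_def
    proof (intro closed_UN ballI finite_atLeastAtMost)
      fix j assume "j \<in> {2..n}"
      have "continuous_on {0..T} (g \<epsilon> j)"
        using gcont[of j \<epsilon>] \<open>j \<in> {2..n}\<close> by (rule_tac continuous_on_subset) auto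
      then show "closed ({0..T} \<inter> g \<epsilon> j -` {..D0})"
        by (rule continuous_closed_preimage) auto
    qed
    define s where "s = Inf S"
    have sS: "s \<in> S" unfolding s_def by (rule closed_contains_Inf[OF Sne Sbdd Scl])
    have slow: "s \<le> t" if "t \<in> S" for t unfolding s_def using Sbdd that by (rule cInf_lower[rotated])
    from sS obtain j0 where j0: "j0 \<in> {2..n}" "s \<in> {0..T}" "g \<epsilon> j0 s \<le> D0"
      unfolding S_def by auto
    have g0: "g \<epsilon> j 0 > D0" if "j \<in> {2..n}" for j
      using le0[OF that] eps unfolding g_def D0_def by auto
    have spos: "s > 0"
    proof (rule ccontr)
      assume "\<not> s > 0" then have "s = 0" using j0 by auto
      then show False using g0[OF j0(1)] j0(3) by auto
    qed
    have "Max ((\<lambda>j. \<rho> s j) ` {2..n}) \<in> (\<lambda>j. \<rho> s j) ` {2..n}"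
      by (rule Max_in[OF fin ne])
    then obtain j where j: "j \<in> {2..n}" "\<rho> s j = Max ((\<lambda>j. \<rho> s j) ` {2..n})" by auto
    have jmax: "\<rho> s k \<le> \<rho> s j" if "k \<in> {2..n}" for k
      unfolding j(2) using that by (intro Max_ge) auto
    have "g \<epsilon> j s \<le> g \<epsilon> j0 s" using jmax[OF j0(1)] unfolding g_def by auto
    with j0 have gjs: "g \<epsilon> j s \<le> D0" by auto
    have "continuous_on {0..s} (g \<epsilon> j)"
      using gcont[of j \<epsilon>] j(1) by (rule_tac continuous_on_subset) auto
    then obtain t where t: "0 \<le> t" "t \<le> s" "g \<epsilon> j t = D0"
      using IVT2'[of "g \<epsilon> j" s D0 0] gjs g0[OF j(1)] spos by auto
    have "t \<in> S" unfolding S_def using t j(1) j0(2) by auto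
    then have "t = s" using slow t by force
    with t have gjs': "g \<epsilon> j s = D0" by simp
    have r1j: "\<rho> s j \<le> \<rho> s 1"
    proof -
      have a: "\<epsilon> * (1 + s) \<le> \<epsilon> * (1 + T)" using j0(2) eps by auto
      have b: "\<rho> s 1 - \<rho> s j + \<epsilon> * (1 + s) = D0" using gjs' unfolding g_def by simp
      show ?thesis using a b eps(2) by linarith
    qed
    let ?d = "\<kappa> * (\<Sum>k=1..n. \<theta>t (min (\<rho> s 1) (\<rho> s k)) * (\<rho> s 1 - \<rho> s k))
      - \<kappa> * (\<Sum>k=1..n. \<theta>t (min (\<rho> s j) (\<rho> s k)) * (\<rho> s j - \<rho> s k)) + \<epsilon>"
    have termwise: "\<theta>t (min (\<rho> s j) (\<rho> s k)) * (\<rho> s j - \<rho> s k)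
        \<le> \<theta>t (min (\<rho> s 1) (\<rho> s k)) * (\<rho> s 1 - \<rho> s k)" if "k \<in> {1..n}" for k
    proof (cases "k = 1")
      case True
      then show ?thesis using r1j nonneg[of "\<rho> s j"]
        by (simp add: min_def mult_nonneg_nonpos)
    next
      case False
      then have "k \<in> {2..n}" using that by auto
      from jmax[OF this] have "min (\<rho> s j) (\<rho> s k) = \<rho> s k" "min (\<rho> s 1) (\<rho> s k) = \<rho> s k"
        using r1j by auto
      then show ?thesis using r1j nonneg[of "\<rho> s k"] by (simp add: mult_left_mono)
    qed
    have "(\<Sum>k=1..n. \<theta>t (min (\<rho> s j) (\<rho> s k)) * (\<rho> s j - \<rho> s k))
        \<le> (\<Sum>k=1..n. \<theta>t (min (\<rho> s 1) (\<rho> s k)) * (\<rho> s 1 - \<rho> s k))"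
      by (rule sum_mono) (rule termwise)
    then have dpos: "?d > 0" using kpos eps
      by (smt (verit, best) mult_left_mono)
    have "s \<in> interior {0::real..}" using spos by simp
    then have "DERIV (g \<epsilon> j) s :> ?d"
      using gderiv[of s j \<epsilon>] spos j(1) at_within_interior by fastforce
    from DERIV_pos_inc_left[OF this dpos] obtain d where d: "d > 0"
      "\<And>h. h > 0 \<Longrightarrow> h < d \<Longrightarrow> g \<epsilon> j (s - h) < g \<epsilon> j s" by auto
    define h where "h = min (d/2) (s/2)"
    have h: "h > 0" "h < d" "h < s" using d spos by (auto simp: h_def)
    have "g \<epsilon> j (s - h) < D0" using d(2)[OF h(1,2)] gjs' by simp
    then have "s - h \<in> S" unfolding S_def using h j(1) j0(2) by (auto intro!: bexI[of _ j])
    then show False using slow h by force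
  qed
  show ?thesis
  proof (intro allI impI)
    fix t :: real assume t: "t \<ge> 0"
    have "\<rho> t j \<le> \<rho> t 1 - D0" if jj: "j \<in> {2..n}" for j
    proof (rule ccontr)
      assume neg: "\<not> \<rho> t j \<le> \<rho> t 1 - D0"
      define \<delta> where "\<delta> = D0 - (\<rho> t 1 - \<rho> t j)"
      have dp: "\<delta> > 0" using neg by (simp add: \<delta>_def)
      define \<epsilon> where "\<epsilon> = min \<delta> D0 / (2 * (1 + t))"
      have ep: "\<epsilon> > 0" using dp D0pos t by (simp add: \<epsilon>_def)
      have e1: "\<epsilon> * (1 + t) = min \<delta> D0 / 2" using t by (simp add: \<epsilon>_def field_simps)
      have "\<epsilon> * (1 + t) < D0" using e1 D0pos by linarith
      from main[OF t ep this] jj t have "g \<epsilon> j t > D0" by auto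
      moreover have "min \<delta> D0 \<le> \<delta>" by simp
      ultimately have "D0 < \<rho> t 1 - \<rho> t j + min \<delta> D0 / 2" "min \<delta> D0 \<le> \<delta>"
        using e1 unfolding g_def by auto
      then show False using dp \<delta>_def by argo
    qed
    then have "Max ((\<lambda>j. \<rho> t j) ` {2..n}) \<le> \<rho> t 1 - D0"
      using fin ne by (subst Max_le_iff) auto
    then show "\<rho> t 1 - Max ((\<lambda>j. \<rho> t j) ` {2..n}) \<ge> \<rho> 0 1 - Max ((\<lambda>j. \<rho> 0 j) ` {2..n})"
      unfolding D0_def by linarith
  qed
qed

end
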